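(* Let $0<q<1$, $0\le p<1$, and \[ \beta_n=\frac{q(1-q^n)(1-pq^n)}{(1+q-(1+p)q^n)(1+q-(1+p)q^{n+1})},\quad n\ge1. \] Then the continued fraction \[ 1-\cfrac{\beta_1}{1-\cfrac{\beta_2}{1-\cfrac{\beta_3}{1-\dotsb}}} \] converges and has the value \[ \frac{q}{1-pq}\frac{\Delta_0}{\Delta_1}=\frac{q(1-p)(pq^2;q)_\infty}{(pq;q)_\infty-(q;q)_\infty}. \] More generally, for every $k\ge0$, the continued fraction \[ 1-\cfrac{\beta_{k+1}}{1-\cfrac{\beta_{k+2}}{1-\cfrac{\beta_{k+3}}{1-\dotsb}}} \] has the value $\dfrac{q}{1+q-(1+p)q^{k+1}}\dfrac{\Delta_{k}}{\Delta_{k+1}}$.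
   Context: $(a;q)_n=\prod_{k=1}^n(1-aq^{k-1})$ for $n\in\{0,1,\dots\}\cup\{\infty\}$, and $\Delta_n=(pq^n;q)_\infty-(q^n;q)_\infty$ for $n\ge0$. The value of the continued fraction is the limit of its finite approximants. *)

theory Defs
  imports "HOL-Analysis.Analysis"
begin

definition qpoch_inf :: "real \<Rightarrow> real \<Rightarrow> real" where
  "qpoch_inf a q = (\<Prod>k. 1 - a * q ^ k)"

definition Delta :: "real \<Rightarrow> real \<Rightarrow> nat \<Rightarrow> real" where
  "Delta p q n = qpoch_inf (p * q ^ n) q - qpoch_inf (q ^ n) q"

definition beta :: "real \<Rightarrow> real \<Rightarrow> nat \<Rightarrow> real" where
  "beta p q n = q * (1 - q ^ n) * (1 - p * q ^ n) /
     ((1 + q - (1 + p) * q ^ n) * (1 + q - (1 + p) * q ^ (n + 1)))"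

text \<open>Finite approximants of 1 - b 0/(1 - b 1/(1 - ...)):
  cfrac b n = 1 - b 0/(1 - b 1/(... (1 - b (n-1)))), cfrac b 0 = 1.\<close>
fun cfrac :: "(nat \<Rightarrow> real) \<Rightarrow> nat \<Rightarrow> real" where
  "cfrac b 0 = 1"
| "cfrac b (Suc n) = 1 - b 0 / cfrac (\<lambda>i. b (Suc i)) n"

end

theory Submission
  imports Defs
begin

lemma qp_conv:
  fixes a q :: real assumes "\<bar>q\<bar> < 1"
  shows "convergent_prod (\<lambda>k. 1 - a * q ^ k)"
proof -
  have "summable (\<lambda>i. norm ((1 - a * q ^ i) - 1))"
    using assms by (simp add: abs_mult power_abs summable_mult)
  then show ?thesis
    by (intro abs_convergent_prod_imp_convergent_prod summable_imp_abs_convergent_prod)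
qed

lemma qp_rec:
  fixes a q :: real assumes "\<bar>q\<bar> < 1"
  shows "qpoch_inf a q = (1 - a) * qpoch_inf (a * q) q"
proof -
  have "(\<lambda>k. 1 - (a * q) * q ^ k) has_prod qpoch_inf (a * q) q"
    using qp_conv[OF assms] unfolding qpoch_inf_def by blast
  then have "(\<lambda>n. (\<lambda>k. 1 - a * q ^ k) (Suc n)) has_prod qpoch_inf (a * q) q"
    by (simp add: mult.assoc)
  from has_prod_Suc_imp[OF this] have "(\<lambda>k. 1 - a * q ^ k) has_prod (qpoch_inf (a * q) q * (1 - a))"
    by simp
  then show ?thesis unfolding qpoch_inf_def using has_prod_unique by (metis mult.commute)
qed

lemma qp_pos:
  fixes a q :: real assumes "0 < q" "q < 1" "0 \<le> a" "a < 1"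
  shows "0 < qpoch_inf a q"
  unfolding qpoch_inf_def
proof (rule less_0_prodinf)
  show "convergent_prod (\<lambda>k. 1 - a * q ^ k)" using assms by (intro qp_conv) auto
  fix i
  have "a * q ^ i \<le> a * 1" using assms by (intro mult_left_mono) (auto simp: power_le_one)
  then show "0 < 1 - a * q ^ i" using assms by auto
qed

lemma qp_mono:
  fixes a b q :: real assumes "0 < q" "q < 1" "0 \<le> a" "a \<le> b" "b < 1"
  shows "qpoch_inf b q \<le> qpoch_inf a q"
  unfolding qpoch_inf_def
proof (rule prodinf_le)
  show "(\<lambda>k. 1 - b * q ^ k) has_prod (\<Prod>k. 1 - b * q ^ k)"
    using qp_conv[of q b] assms by auto
  show "(\<lambda>k. 1 - a * q ^ k) has_prod (\<Prod>k. 1 - a * q ^ k)"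
    using qp_conv[of q a] assms by auto
  fix n
  have "b * q ^ n \<le> b * 1" using assms by (intro mult_left_mono) (auto simp: power_le_one)
  moreover have "a * q ^ n \<le> b * q ^ n" using assms by (intro mult_right_mono) auto
  ultimately show "0 \<le> 1 - b * q ^ n \<and> 1 - b * q ^ n \<le> 1 - a * q ^ n" using assms by auto
qed

lemma weier_fin:
  fixes x :: "nat \<Rightarrow> real" assumes "\<And>i. 0 \<le> x i" "\<And>i. x i \<le> 1"
  shows "1 - (\<Sum>i\<le>n. x i) \<le> (\<Prod>i\<le>n. 1 - x i)"
proof (induction n)
  case 0 then show ?case by simp
next
  case (Suc n)
  have p: "0 \<le> (\<Prod>i\<le>n. 1 - x i)" "(\<Prod>i\<le>n. 1 - x i) \<le> 1"
    using assms by (auto intro!: prod_nonneg prod_le_1)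
  have "1 - (\<Sum>i\<le>Suc n. x i) = (1 - (\<Sum>i\<le>n. x i)) - x (Suc n)" by simp
  also have "\<dots> \<le> (\<Prod>i\<le>n. 1 - x i) - x (Suc n) * (\<Prod>i\<le>n. 1 - x i)"
    using Suc p assms(1)[of "Suc n"] mult_left_mono[OF p(2) assms(1)[of "Suc n"]] by linarith
  also have "\<dots> = (\<Prod>i\<le>Suc n. 1 - x i)" by (simp add: algebra_simps)
  finally show ?case .
qed

lemma qp_lower:
  fixes a q :: real assumes "0 < q" "q < 1" "0 \<le> a" "a \<le> 1"
  shows "1 - a / (1 - q) \<le> qpoch_inf a q"
  unfolding qpoch_inf_def
proof (rule LIMSEQ_le_const[OF convergent_prod_LIMSEQ])
  show "convergent_prod (\<lambda>k. 1 - a * q ^ k)" using assms by (intro qp_conv) auto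
  show "\<exists>N. \<forall>n\<ge>N. 1 - a / (1 - q) \<le> (\<Prod>i\<le>n. 1 - a * q ^ i)"
  proof (intro exI allI impI)
    fix n :: nat
    have s: "(\<Sum>i\<le>n. a * q ^ i) \<le> a / (1 - q)"
    proof -
      have "(\<lambda>i. a * q ^ i) sums (a * (1 / (1 - q)))"
        using assms by (intro sums_mult geometric_sums) auto
      then have sm: "summable (\<lambda>i. a * q ^ i)" and eq: "(\<Sum>i. a * q ^ i) = a * (1 / (1 - q))"
        by (simp_all add: sums_iff)
      have "(\<Sum>i<Suc n. a * q ^ i) \<le> (\<Sum>i. a * q ^ i)"
        by (rule sum_le_suminf[OF sm]) (use assms in auto)
      then have "(\<Sum>i<Suc n. a * q ^ i) \<le> a * (1 / (1 - q))" using eq by simp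
      then show ?thesis by (simp add: lessThan_Suc_atMost)
    qed
    have "1 - (\<Sum>i\<le>n. a * q ^ i) \<le> (\<Prod>i\<le>n. 1 - a * q ^ i)"
    proof (rule weier_fin)
      fix i
      show "0 \<le> a * q ^ i" using assms by simp
      have "a * q ^ i \<le> 1 * 1" using assms by (intro mult_mono) (auto simp: power_le_one)
      then show "a * q ^ i \<le> 1" by simp
    qed
    then show "1 - a / (1 - q) \<le> (\<Prod>i\<le>n. 1 - a * q ^ i)" using s by linarith
  qed
qed


lemma cf_err:
  fixes b t :: "nat \<Rightarrow> real"
  assumes "\<And>j. t j > 0" "\<And>j. b j \<ge> 0" "\<And>j. t j = 1 - b j / t (Suc j)"
  shows "t 0 \<le> cfrac b n \<and> cfrac b n - t 0 \<le> (\<Prod>j<n. b j / (t (Suc j))^2) * (1 - t n)"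
  using assms
proof (induction n arbitrary: b t)
  case 0
  have "b 0 / t 1 \<ge> 0" using "0.prems"(1,2)[of 0] "0.prems"(1)[of 1] by simp
  then show ?case using "0.prems"(3)[of 0] by simp
next
  case (Suc n)
  define s where "s = cfrac (\<lambda>i. b (Suc i)) n"
  have h1: "\<And>j. 0 < t (Suc j)" by (rule Suc.prems(1))
  have h2: "\<And>j. 0 \<le> b (Suc j)" by (rule Suc.prems(2))
  have h3: "\<And>j. t (Suc j) = 1 - b (Suc j) / t (Suc (Suc j))" by (rule Suc.prems(3))
  note IH0 = Suc.IH[of "\<lambda>i. t (Suc i)" "\<lambda>i. b (Suc i)", OF h1 h2 h3]
  have IH: "t 1 \<le> s \<and> s - t 1 \<le> (\<Prod>j<n. b (Suc j) / (t (Suc (Suc j)))^2) * (1 - t (Suc n))"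
    unfolding s_def using IH0 by (simp only: One_nat_def)
  define P where "P = (\<Prod>j<n. b (Suc j) / (t (Suc (Suc j)))^2) * (1 - t (Suc n))"
  have t1: "t 1 > 0" by (rule Suc.prems(1))
  have b0: "b 0 \<ge> 0" by (rule Suc.prems(2))
  have s0: "s > 0" using IH t1 by linarith
  have e0: "t 0 = 1 - b 0 / t 1" using Suc.prems(3)[of 0] by simp
  have c: "cfrac b (Suc n) = 1 - b 0 / s" unfolding s_def by simp
  have "b 0 / s \<le> b 0 / t 1" using IH t1 b0 by (intro divide_left_mono) auto
  then have A: "t 0 \<le> cfrac b (Suc n)" using c e0 by linarith
  have "cfrac b (Suc n) - t 0 = b 0 * (s - t 1) / (t 1 * s)"
    unfolding c using s0 t1 by (subst e0) (simp add: field_simps)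
  also have "\<dots> \<le> b 0 * (s - t 1) / (t 1 * t 1)"
    using IH s0 t1 b0 by (intro divide_left_mono mult_left_mono mult_nonneg_nonneg) auto
  also have "\<dots> \<le> b 0 * P / (t 1 * t 1)"
    using IH b0 t1 unfolding P_def by (intro divide_right_mono mult_left_mono) auto
  also have "\<dots> = (\<Prod>j<Suc n. b j / (t (Suc j))^2) * (1 - t (Suc n))"
    unfolding P_def prod.lessThan_Suc_shift by (simp add: power2_eq_square)
  finally show ?case using A by simp
qed

definition cc :: "real \<Rightarrow> real \<Rightarrow> nat \<Rightarrow> real" where
  "cc p q n = 1 + q - (1 + p) * q ^ n"
definition GG :: "real \<Rightarrow> real \<Rightarrow> nat \<Rightarrow> real" where
  "GG p q n = q * Delta p q n / (cc p q (n + 1) * Delta p q (n + 1))"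
definition RR :: "real \<Rightarrow> real \<Rightarrow> nat \<Rightarrow> real" where
  "RR p q n = cc p q n * (Delta p q n)^2"

context
  fixes p q :: real
  assumes q0: "0 < q" and q1: "q < 1" and p0: "0 \<le> p" and p1: "p < 1"
begin

lemma A_rec: "qpoch_inf (p * q ^ n) q = (1 - p * q ^ n) * qpoch_inf (p * q ^ Suc n) q"
proof -
  have "qpoch_inf (p * q ^ n) q = (1 - p * q ^ n) * qpoch_inf (p * q ^ n * q) q"
    using qp_rec[of q "p * q ^ n"] q0 q1 by simp
  moreover have "p * q ^ n * q = p * q ^ Suc n" by (simp add: algebra_simps)
  ultimately show ?thesis by simp
qed

lemma B_rec: "qpoch_inf (q ^ n) q = (1 - q ^ n) * qpoch_inf (q ^ Suc n) q"
proof -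
  have "qpoch_inf (q ^ n) q = (1 - q ^ n) * qpoch_inf (q ^ n * q) q"
    using qp_rec[of q "q ^ n"] q0 q1 by simp
  moreover have "q ^ n * q = q ^ Suc n" by (simp add: algebra_simps)
  ultimately show ?thesis by simp
qed

lemma pq_lt: "p * q ^ n < 1"
proof -
  have "p * q ^ n \<le> p * 1" using p0 q0 q1 by (intro mult_left_mono) (auto simp: power_le_one)
  then show ?thesis using p1 by simp
qed

lemma A_pos: "0 < qpoch_inf (p * q ^ n) q"
  using qp_pos[of q "p * q ^ n"] q0 q1 p0 pq_lt by simp

lemma Delta_lower: "(1 - p) * q ^ n * qpoch_inf (p * q ^ Suc n) q \<le> Delta p q n"
proof -
  have qs: "q ^ Suc n < 1" using q0 q1 by (rule power_Suc_less_one)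
  have "qpoch_inf (q ^ Suc n) q \<le> qpoch_inf (p * q ^ Suc n) q"
    using q0 q1 p0 p1 qs by (intro qp_mono) (auto simp: mult_left_le_one_le)
  moreover have "0 \<le> 1 - q ^ n" using q0 q1 by (simp add: power_le_one)
  ultimately have "(1 - q ^ n) * qpoch_inf (q ^ Suc n) q \<le> (1 - q ^ n) * qpoch_inf (p * q ^ Suc n) q"
    by (intro mult_left_mono)
  then show ?thesis unfolding Delta_def using A_rec[of n] B_rec[of n]
    by (simp add: algebra_simps)
qed

lemma Delta_pos: "0 < Delta p q n"
proof -
  have "0 < (1 - p) * q ^ n * qpoch_inf (p * q ^ Suc n) q"
    using p1 q0 A_pos[of "Suc n"] by simp
  then show ?thesis using Delta_lower[of n] by linarith
qed

lemma Delta_upper: "Delta p q n \<le> q ^ n / (1 - q)"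
proof -
  have "qpoch_inf (p * q ^ n) q \<le> qpoch_inf 0 q"
    using q0 q1 p0 pq_lt[of n] by (intro qp_mono) auto
  also have "qpoch_inf 0 q = 1" unfolding qpoch_inf_def by simp
  finally have a: "qpoch_inf (p * q ^ n) q \<le> 1" .
  have "1 - q ^ n / (1 - q) \<le> qpoch_inf (q ^ n) q"
    using q0 q1 by (intro qp_lower) (auto simp: power_le_one)
  then show ?thesis using a unfolding Delta_def by linarith
qed

lemma cc_pos: "n \<ge> 1 \<Longrightarrow> 0 < cc p q n"
proof -
  assume "n \<ge> 1"
  then have "q ^ n \<le> q ^ 1" using q0 q1 by (intro power_decreasing) auto
  then have "(1 + p) * q ^ n \<le> (1 + p) * q" using p0 by (intro mult_left_mono) auto
  moreover have "p * q < 1" using pq_lt[of 1] by simp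
  ultimately show ?thesis unfolding cc_def by (simp add: algebra_simps)
qed

lemma cc_le: "cc p q n \<le> 1 + q"
  unfolding cc_def using p0 q0 by simp

lemma Delta_rec:
  "q * Delta p q n = cc p q (n + 1) * Delta p q (n + 1)
     - (1 - q ^ (n + 1)) * (1 - p * q ^ (n + 1)) * Delta p q (n + 2)"
proof -
  define X where "X = q ^ n"
  define A2 where "A2 = qpoch_inf (p * q ^ Suc (Suc n)) q"
  define B2 where "B2 = qpoch_inf (q ^ Suc (Suc n)) q"
  have X1: "q ^ Suc n = q * X" unfolding X_def by simp
  have a1: "qpoch_inf (p * q ^ Suc n) q = (1 - p * (q * X)) * A2"
    using A_rec[of "Suc n"] unfolding A2_def X1 by simp
  have b1: "qpoch_inf (q ^ Suc n) q = (1 - q * X) * B2"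
    using B_rec[of "Suc n"] unfolding B2_def X1 by simp
  have a0: "qpoch_inf (p * q ^ n) q = (1 - p * X) * ((1 - p * (q * X)) * A2)"
    using A_rec[of n] a1 unfolding X_def by simp
  have b0: "qpoch_inf (q ^ n) q = (1 - X) * ((1 - q * X) * B2)"
    using B_rec[of n] b1 unfolding X_def by simp
  have d0: "Delta p q n = (1 - p * X) * ((1 - p * (q * X)) * A2) - (1 - X) * ((1 - q * X) * B2)"
    unfolding Delta_def using a0 b0 by simp
  have d1: "Delta p q (n + 1) = (1 - p * (q * X)) * A2 - (1 - q * X) * B2"
    unfolding Delta_def using a1 b1 by simp
  have d2: "Delta p q (n + 2) = A2 - B2"
    unfolding Delta_def A2_def B2_def by (simp add: numeral_2_eq_2)
  have c1: "cc p q (n + 1) = 1 + q - (1 + p) * (q * X)" unfolding cc_def using X1 by simp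
  have X1': "q ^ (n + 1) = q * X" using X1 by simp
  show ?thesis unfolding d0 d1 d2 c1 X1' by algebra
qed

lemma GG_pos: "0 < GG p q n"
  unfolding GG_def using Delta_pos[of n] Delta_pos[of "n+1"] cc_pos[of "n+1"] q0 by simp

lemma GG_rec: "GG p q n = 1 - beta p q (n + 1) / GG p q (n + 1)"
proof -
  have d0: "Delta p q n \<noteq> 0" "Delta p q (n+1) \<noteq> 0" "Delta p q (n+2) \<noteq> 0"
    using Delta_pos[of n] Delta_pos[of "n+1"] Delta_pos[of "n+2"] by linarith+
  have c0: "cc p q (n+1) \<noteq> 0" "cc p q (n+2) \<noteq> 0"
    using cc_pos[of "n+1"] cc_pos[of "n+2"] by linarith+
  have cce: "1 + q - (1 + p) * q ^ (n + 1) = cc p q (n+1)" "1 + q - (1 + p) * q ^ (n + 1 + 1) = cc p q (n+2)"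
    unfolding cc_def by (simp_all add: numeral_2_eq_2)
  have "beta p q (n + 1) / GG p q (n + 1) =
      (1 - q ^ (n + 1)) * (1 - p * q ^ (n + 1)) * Delta p q (n + 2) / (cc p q (n+1) * Delta p q (n+1))"
    unfolding beta_def GG_def cce using d0 c0 q0
    by (simp add: field_simps numeral_2_eq_2 power2_eq_square)
  also have "\<dots> = 1 - GG p q n"
    unfolding GG_def using Delta_rec[of n] d0 c0 by (simp add: field_simps)
  finally show ?thesis by simp
qed

lemma beta_nonneg: "m \<ge> 1 \<Longrightarrow> 0 \<le> beta p q m"
proof -
  assume m: "m \<ge> 1"
  have "0 \<le> 1 - q ^ m" using q0 q1 by (simp add: power_le_one)
  moreover have "0 \<le> 1 - p * q ^ m" using pq_lt[of m] by simp
  moreover have "0 < cc p q m" "0 < cc p q (m + 1)" using cc_pos m by auto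
  ultimately show ?thesis unfolding beta_def cc_def[symmetric] using q0
    by (intro divide_nonneg_pos mult_nonneg_nonneg mult_pos_pos) auto
qed

lemma RR_pos: "m \<ge> 1 \<Longrightarrow> 0 < RR p q m"
proof -
  assume m: "m \<ge> 1"
  have "0 < cc p q m" using cc_pos m by simp
  moreover have "0 < (Delta p q m)^2" using Delta_pos[of m] by simp
  ultimately show ?thesis unfolding RR_def by simp
qed

lemma RR_upper: "RR p q m \<le> (1 + q) * (q ^ m / (1 - q))^2"
  unfolding RR_def
proof (rule mult_mono)
  show "cc p q m \<le> 1 + q" by (rule cc_le)
  show "(Delta p q m)^2 \<le> (q ^ m / (1 - q))^2"
    using Delta_pos[of m] Delta_upper[of m] by (intro power_mono) auto
  show "0 \<le> 1 + q" using q0 by simp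
  show "0 \<le> (Delta p q m)^2" by simp
qed

lemma term_eq: "m \<ge> 1 \<Longrightarrow> beta p q m / (GG p q m)^2
   = ((1 - q ^ m) * (1 - p * q ^ m)) * (RR p q (m + 1) / (q * RR p q m))"
proof -
  assume m: "m \<ge> 1"
  have d0: "Delta p q m \<noteq> 0" "Delta p q (m+1) \<noteq> 0"
    using Delta_pos[of m] Delta_pos[of "m+1"] by linarith+
  have c0: "cc p q m \<noteq> 0" "cc p q (m+1) \<noteq> 0"
    using cc_pos[of m] cc_pos[of "m+1"] m by linarith+
  show ?thesis unfolding beta_def cc_def[symmetric] GG_def RR_def using d0 c0 q0
    by (simp add: field_simps power2_eq_square)
qed

lemma term_le: "m \<ge> 1 \<Longrightarrow> beta p q m / (GG p q m)^2 \<le> RR p q (m + 1) / (q * RR p q m)"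
proof -
  assume m: "m \<ge> 1"
  have f0: "0 \<le> (1 - q ^ m) * (1 - p * q ^ m)" "(1 - q ^ m) * (1 - p * q ^ m) \<le> 1 * 1"
  proof -
    have "0 \<le> 1 - q ^ m" "1 - q ^ m \<le> 1" using q0 q1 by (auto simp: power_le_one)
    moreover have "0 \<le> 1 - p * q ^ m" "1 - p * q ^ m \<le> 1" using pq_lt[of m] p0 q0 by auto
    ultimately show "0 \<le> (1 - q ^ m) * (1 - p * q ^ m)" "(1 - q ^ m) * (1 - p * q ^ m) \<le> 1 * 1"
      by (simp, intro mult_mono, auto)
  qed
  have "0 \<le> RR p q (m + 1) / (q * RR p q m)"
    using RR_pos[of m] RR_pos[of "m+1"] m q0 by simp
  then have "((1 - q ^ m) * (1 - p * q ^ m)) * (RR p q (m + 1) / (q * RR p q m))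
      \<le> 1 * (RR p q (m + 1) / (q * RR p q m))"
    using f0 by (intro mult_right_mono) auto
  then show ?thesis using term_eq[OF m] by simp
qed

lemma prod_bound:
  "(\<Prod>j<n. beta p q (k + 1 + j) / (GG p q (k + Suc j))^2)
     \<le> RR p q (k + 1 + n) / (q ^ n * RR p q (k + 1))"
proof (induction n)
  case 0
  then show ?case using RR_pos[of "k+1"] by simp
next
  case (Suc n)
  have e: "k + Suc n = k + 1 + n" by simp
  have f0: "0 \<le> beta p q (k + 1 + n) / (GG p q (k + Suc n))^2"
    using beta_nonneg[of "k+1+n"] by simp
  have fl: "beta p q (k + 1 + n) / (GG p q (k + Suc n))^2
      \<le> RR p q (k + 1 + n + 1) / (q * RR p q (k + 1 + n))"
    unfolding e by (rule term_le) simp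
  have r0: "0 \<le> RR p q (k + 1 + n) / (q ^ n * RR p q (k + 1))"
    using RR_pos[of "k+1+n"] RR_pos[of "k+1"] q0 by simp
  have "(\<Prod>j<Suc n. beta p q (k + 1 + j) / (GG p q (k + Suc j))^2)
     = (\<Prod>j<n. beta p q (k + 1 + j) / (GG p q (k + Suc j))^2)
        * (beta p q (k + 1 + n) / (GG p q (k + Suc n))^2)"
    by (rule prod.lessThan_Suc)
  also have "\<dots> \<le> (RR p q (k + 1 + n) / (q ^ n * RR p q (k + 1)))
        * (RR p q (k + 1 + n + 1) / (q * RR p q (k + 1 + n)))"
    using Suc.IH f0 fl r0 by (intro mult_mono) auto
  also have "\<dots> = RR p q (k + 1 + Suc n) / (q ^ Suc n * RR p q (k + 1))"
    using RR_pos[of "k+1+n"] RR_pos[of "k+1"] q0 by (simp add: field_simps)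
  finally show ?case .
qed

lemma main_k: "(\<lambda>n. cfrac (\<lambda>i. beta p q (k + 1 + i)) n) \<longlonglongrightarrow> GG p q k"
proof -
  define b where "b = (\<lambda>j. beta p q (k + 1 + j))"
  define t where "t = (\<lambda>j. GG p q (k + j))"
  define C where "C = (1 + q) * q ^ (2 * (k + 1)) / ((1 - q)^2 * RR p q (k + 1))"
  have tpos: "\<And>j. t j > 0" unfolding t_def using GG_pos by simp
  have hyp: "\<And>j. b j \<ge> 0" "\<And>j. t j = 1 - b j / t (Suc j)"
  proof -
    fix j
    show "b j \<ge> 0" unfolding b_def using beta_nonneg by simp
    have e1: "k + 1 + j = k + j + 1" "k + Suc j = k + j + 1" by simp_all
    show "t j = 1 - b j / t (Suc j)" unfolding t_def b_def e1 by (rule GG_rec)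
  qed
  have bnd: "\<bar>cfrac b n - GG p q k\<bar> \<le> C * q ^ n" for n
  proof -
    have ce: "t 0 \<le> cfrac b n \<and> cfrac b n - t 0 \<le> (\<Prod>j<n. b j / (t (Suc j))^2) * (1 - t n)"
      by (rule cf_err) (rule tpos, rule hyp(1), rule hyp(2))
    define P where "P = (\<Prod>j<n. b j / (t (Suc j))^2)"
    have P0: "0 \<le> P" unfolding P_def using hyp(1) by (intro prod_nonneg) auto
    have "P * (1 - t n) \<le> P * 1" using P0 tpos[of n] by (intro mult_left_mono) auto
    have Pb: "P \<le> RR p q (k + 1 + n) / (q ^ n * RR p q (k + 1))"
      unfolding P_def b_def t_def using prod_bound by simp
    also have "\<dots> \<le> (1 + q) * (q ^ (k + 1 + n) / (1 - q))^2 / (q ^ n * RR p q (k + 1))"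
      using RR_upper[of "k+1+n"] RR_pos[of "k+1"] q0 by (intro divide_right_mono) auto
    also have "\<dots> = C * q ^ n"
    proof -
      have gen0: "(1 + q) * (a * Q / d)^2 / (Q * R) = (1 + q) * (a * a) / (d^2 * R) * Q"
        if "Q > 0" "R > 0" "d > 0" for a Q R d :: real
        using that by (simp add: field_simps power2_eq_square)
      have gen: "(1 + q) * (a * Q / (1 - q))^2 / (Q * R) = (1 + q) * (a * a) / ((1 - q)^2 * R) * Q"
        if "Q > 0" "R > 0" for a Q R :: real
        using gen0[of Q R "1 - q" a] that q1 by simp
      have h1: "q ^ (k + 1 + n) = q ^ (k + 1) * q ^ n" by (simp add: power_add)
      have h2: "q ^ (2 * (k + 1)) = q ^ (k + 1) * q ^ (k + 1)" by (simp add: mult_2 power_add)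
      show ?thesis unfolding C_def h1 h2
        using gen[of "q ^ n" "RR p q (k + 1)" "q ^ (k + 1)"] RR_pos[of "k+1"] q0 by simp
    qed
    finally show ?thesis using ce \<open>P * (1 - t n) \<le> P * 1\<close> unfolding P_def t_def by simp
  qed
  have "(\<lambda>n. cfrac b n - GG p q k) \<longlonglongrightarrow> 0"
  proof (rule tendsto_sandwich[of "\<lambda>n. - (C * q ^ n)" _ _ "\<lambda>n. C * q ^ n"])
    show "\<forall>\<^sub>F n in sequentially. - (C * q ^ n) \<le> cfrac b n - GG p q k"
      using bnd by (intro always_eventually allI) (metis abs_le_D2 minus_le_iff)
    show "\<forall>\<^sub>F n in sequentially. cfrac b n - GG p q k \<le> C * q ^ n"
      using bnd by (intro always_eventually allI) (metis abs_le_D1)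
    have "(\<lambda>n. C * q ^ n) \<longlonglongrightarrow> C * 0"
      using q0 q1 by (intro tendsto_mult tendsto_const LIMSEQ_power_zero) auto
    then show "(\<lambda>n. C * q ^ n) \<longlonglongrightarrow> 0" by simp
    from tendsto_minus[OF this] show "(\<lambda>n. - (C * q ^ n)) \<longlonglongrightarrow> 0" by simp
  qed
  from tendsto_add[OF this tendsto_const[of "GG p q k"]]
  show ?thesis unfolding b_def by simp
qed

end

theorem theorem7:
  fixes p q :: real
  assumes "0 < q" "q < 1" "0 \<le> p" "p < 1"
  shows "((\<lambda>n. cfrac (\<lambda>i. beta p q (i + 1)) n)
            \<longlonglongrightarrow> q / (1 - p * q) * Delta p q 0 / Delta p q 1)
       \<and> q / (1 - p * q) * Delta p q 0 / Delta p q 1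
           = q * (1 - p) * qpoch_inf (p * q ^ 2) q / (qpoch_inf (p * q) q - qpoch_inf q q)
       \<and> (\<forall>k::nat. (\<lambda>n. cfrac (\<lambda>i. beta p q (k + 1 + i)) n)
           \<longlonglongrightarrow> q / (1 + q - (1 + p) * q ^ (k + 1)) * Delta p q k / Delta p q (k + 1))"
proof -
  have G: "GG p q k = q / (1 + q - (1 + p) * q ^ (k + 1)) * Delta p q k / Delta p q (k + 1)" for k
    unfolding GG_def cc_def by simp
  have K: "\<forall>k::nat. (\<lambda>n. cfrac (\<lambda>i. beta p q (k + 1 + i)) n)
           \<longlonglongrightarrow> q / (1 + q - (1 + p) * q ^ (k + 1)) * Delta p q k / Delta p q (k + 1)"
    using main_k[OF assms] G by simp
  have e0: "1 + q - (1 + p) * q ^ (0 + 1) = 1 - p * q" by (simp add: algebra_simps)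
  have K0: "(\<lambda>n. cfrac (\<lambda>i. beta p q (i + 1)) n)
            \<longlonglongrightarrow> q / (1 - p * q) * Delta p q 0 / Delta p q 1"
    using spec[OF K, of 0] unfolding e0 by (simp add: add.commute)
  have pq: "1 - p * q \<noteq> 0" using pq_lt[OF assms, of 1] by simp
  have r1: "qpoch_inf p q = (1 - p) * ((1 - p * q) * qpoch_inf (p * q ^ 2) q)"
    using A_rec[OF assms, of 0] A_rec[OF assms, of 1] by (simp add: power2_eq_square)
  have r2: "qpoch_inf 1 q = 0" using B_rec[OF assms, of 0] by simp
  have D0: "Delta p q 0 = (1 - p) * ((1 - p * q) * qpoch_inf (p * q ^ 2) q)"
    unfolding Delta_def using r1 r2 by simp
  have D1: "Delta p q 1 = qpoch_inf (p * q) q - qpoch_inf q q"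
    unfolding Delta_def by simp
  have E: "q / (1 - p * q) * Delta p q 0 / Delta p q 1
           = q * (1 - p) * qpoch_inf (p * q ^ 2) q / (qpoch_inf (p * q) q - qpoch_inf q q)"
  proof -
    have E1: "q / (1 - p * q) * ((1 - p) * ((1 - p * q) * qpoch_inf (p * q ^ 2) q))
        = q * (1 - p) * qpoch_inf (p * q ^ 2) q" using pq by (simp add: field_simps)
    show ?thesis unfolding D0 D1 E1 by (rule refl)
  qed
  show ?thesis using K0 E K by blast
qed

end
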